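(* Let $\overrightarrow{W}$ be a Morse sequence on a simplicial complex $K$ and let $\sigma,\tau$ be critical simplices of $\overrightarrow{W}$. Then $\sigma\in\widehat{\partial}(\tau)$ if and only if $\tau\in\widehat{\delta}(\sigma)$.
   Context: A simplicial complex $K$ is a finite collection of non-empty finite sets closed under taking non-empty subsets; $\dim\sigma=|\sigma|-1$, $K^{(p)}$ the set of $p$-simplices. A pair $(\sigma,\tau)$ with $\sigma\subsetneq\tau$ is a free pair for $K$ if $\tau$ is the only simplex other than $\sigma$ containing $\sigma$; $K$ is then an elementary expansion of $K\setminus\{\sigma,\tau\}$. If $\nu$ is a facet (maximal simplex) of $K$, $K$ is an elementary filling of $K\setminus\{\nu\}$. A Morse sequence on $K$ is a sequence $\langle\emptyset=K_0,\dots,K_k=K\rangle$ with each $K_i$ an elementary expansion or filling of $K_{i-1}$; simplices added by fillings are critical; for an expansion $K_i=K_{i-1}\cup\{\sigma,\tau\}$, $\sigma\subset\tau$, $(\sigma,\tau)$ is a regular pair, $\sigma$ lower regular, $\tau$ upper regular. $K[p]$ is the $\mathbb{Z}_2$-vector space of subsets of $K^{(p)}$ (sum = symmetric difference, $0=\emptyset$); $\partial(\sigma)=\{\tau\in K^{(p-1)}:\tau\subset\sigma\}$, $\delta(\sigma)=\{\tau\in K^{(p+1)}:\sigma\subset\tau\}$, extended linearly to chains. The reference map $\curlywedge$ is the unique map assigning to each $p$-simplex a set of critical $p$-simplices, extended linearly (mod 2) to chains, with $\curlywedge(\nu)=\{\nu\}$ for critical $\nu$ and $\curlywedge(\tau)=0=\curlywedge(\partial(\tau))$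 for upper regular $\tau$; the coreference map $\curlyvee$ is the unique such map with $\curlyvee(\nu)=\{\nu\}$ for critical $\nu$ and $\curlyvee(\sigma)=0=\curlyvee(\delta(\sigma))$ for lower regular $\sigma$. For a critical $p$-simplex $\nu$, $\widehat{\partial}(\nu)=\curlywedge(\partial(\nu))$ and $\widehat{\delta}(\nu)=\curlyvee(\delta(\nu))$. *)

theory Defs
  imports Main
begin

text \<open>Simplices are finite non-empty sets of vertices; a simplex s has dimension card s - 1.\<close>

definition simplicial_complex :: "'a set set \<Rightarrow> bool" where
  "simplicial_complex K \<longleftrightarrow> finite K \<and> (\<forall>s\<in>K. finite s \<and> s \<noteq> {}) \<and>
     (\<forall>s\<in>K. \<forall>t. t \<subseteq> s \<and> t \<noteq> {} \<longrightarrow> t \<in> K)"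

definition free_pair :: "'a set set \<Rightarrow> 'a set \<Rightarrow> 'a set \<Rightarrow> bool" where
  "free_pair K \<sigma> \<tau> \<longleftrightarrow> \<sigma> \<subset> \<tau> \<and> \<sigma> \<in> K \<and> \<tau> \<in> K \<and>
     (\<forall>\<rho>\<in>K. \<sigma> \<subseteq> \<rho> \<longrightarrow> \<rho> = \<sigma> \<or> \<rho> = \<tau>)"

definition facet :: "'a set set \<Rightarrow> 'a set \<Rightarrow> bool" where
  "facet K \<nu> \<longleftrightarrow> \<nu> \<in> K \<and> (\<forall>\<rho>\<in>K. \<nu> \<subseteq> \<rho> \<longrightarrow> \<rho> = \<nu>)"

definition elem_expansion :: "'a set set \<Rightarrow> 'a set set \<Rightarrow> bool" where
  "elem_expansion K L \<longleftrightarrow> (\<exists>\<sigma> \<tau>. free_pair K \<sigma> \<tau> \<and> L = K - {\<sigma>, \<tau>})"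

definition elem_filling :: "'a set set \<Rightarrow> 'a set set \<Rightarrow> bool" where
  "elem_filling K L \<longleftrightarrow> (\<exists>\<nu>. facet K \<nu> \<and> L = K - {\<nu>})"

definition morse_seq :: "'a set set \<Rightarrow> 'a set set list \<Rightarrow> bool" where
  "morse_seq K Ks \<longleftrightarrow> Ks \<noteq> [] \<and> Ks ! 0 = {} \<and> last Ks = K \<and>
     (\<forall>i. Suc i < length Ks \<longrightarrow> simplicial_complex (Ks ! Suc i) \<and>
        (elem_expansion (Ks ! Suc i) (Ks ! i) \<or> elem_filling (Ks ! Suc i) (Ks ! i)))"

definition critical :: "'a set set list \<Rightarrow> 'a set \<Rightarrow> bool" where
  "critical Ks \<nu> \<longleftrightarrow> (\<exists>i. Suc i < length Ks \<and> facet (Ks ! Suc i) \<nu> \<and> Ks ! i = Ks ! Suc i - {\<nu>})"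

definition regular_pair :: "'a set set list \<Rightarrow> 'a set \<Rightarrow> 'a set \<Rightarrow> bool" where
  "regular_pair Ks \<sigma> \<tau> \<longleftrightarrow> (\<exists>i. Suc i < length Ks \<and> free_pair (Ks ! Suc i) \<sigma> \<tau> \<and>
      Ks ! i = Ks ! Suc i - {\<sigma>, \<tau>})"

definition lower_regular :: "'a set set list \<Rightarrow> 'a set \<Rightarrow> bool" where
  "lower_regular Ks \<sigma> \<longleftrightarrow> (\<exists>\<tau>. regular_pair Ks \<sigma> \<tau>)"

definition upper_regular :: "'a set set list \<Rightarrow> 'a set \<Rightarrow> bool" where
  "upper_regular Ks \<tau> \<longleftrightarrow> (\<exists>\<sigma>. regular_pair Ks \<sigma> \<tau>)"

text \<open>Boundary and coboundary of a simplex in K (chains = finite sets of simplices, Z_2 sums).\<close>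
definition bd :: "'a set set \<Rightarrow> 'a set \<Rightarrow> 'a set set" where
  "bd K \<sigma> = {t \<in> K. t \<subseteq> \<sigma> \<and> card t + 1 = card \<sigma>}"

definition cobd :: "'a set set \<Rightarrow> 'a set \<Rightarrow> 'a set set" where
  "cobd K \<sigma> = {t \<in> K. \<sigma> \<subseteq> t \<and> card t = card \<sigma> + 1}"

definition lin_ext :: "('a set \<Rightarrow> 'a set set) \<Rightarrow> 'a set set \<Rightarrow> 'a set set" where
  "lin_ext f c = {\<nu>. odd (card {x \<in> c. \<nu> \<in> f x})}"

definition reference_map :: "'a set set \<Rightarrow> 'a set set list \<Rightarrow> 'a set \<Rightarrow> 'a set set" where
  "reference_map K Ks = (THE r.
     (\<forall>x. x \<notin> K \<longrightarrow> r x = {}) \<and>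
     (\<forall>x\<in>K. r x \<subseteq> {\<nu> \<in> K. critical Ks \<nu> \<and> card \<nu> = card x}) \<and>
     (\<forall>\<nu>. critical Ks \<nu> \<longrightarrow> r \<nu> = {\<nu>}) \<and>
     (\<forall>\<tau>. upper_regular Ks \<tau> \<longrightarrow> r \<tau> = {} \<and> lin_ext r (bd K \<tau>) = {}))"

definition coreference_map :: "'a set set \<Rightarrow> 'a set set list \<Rightarrow> 'a set \<Rightarrow> 'a set set" where
  "coreference_map K Ks = (THE r.
     (\<forall>x. x \<notin> K \<longrightarrow> r x = {}) \<and>
     (\<forall>x\<in>K. r x \<subseteq> {\<nu> \<in> K. critical Ks \<nu> \<and> card \<nu> = card x}) \<and>
     (\<forall>\<nu>. critical Ks \<nu> \<longrightarrow> r \<nu> = {\<nu>}) \<and>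
     (\<forall>\<sigma>. lower_regular Ks \<sigma> \<longrightarrow> r \<sigma> = {} \<and> lin_ext r (cobd K \<sigma>) = {}))"

definition morse_bd :: "'a set set \<Rightarrow> 'a set set list \<Rightarrow> 'a set \<Rightarrow> 'a set set" where
  "morse_bd K Ks \<nu> = lin_ext (reference_map K Ks) (bd K \<nu>)"

definition morse_cobd :: "'a set set \<Rightarrow> 'a set set list \<Rightarrow> 'a set \<Rightarrow> 'a set set" where
  "morse_cobd K Ks \<nu> = lin_ext (coreference_map K Ks) (cobd K \<nu>)"

end

theory Submission
  imports Defs
begin

definition spec :: "'a set set \<Rightarrow> ('a set \<Rightarrow> bool) \<Rightarrow> ('a set \<Rightarrow> bool) \<Rightarrow> ('a set \<Rightarrow> 'a set set) \<Rightarrow> ('a set \<Rightarrow> 'a set set) \<Rightarrow> bool" where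
  "spec K crit kil N r \<longleftrightarrow> (\<forall>x. x \<notin> K \<longrightarrow> r x = {}) \<and>
     (\<forall>x\<in>K. r x \<subseteq> {\<nu> \<in> K. crit \<nu> \<and> card \<nu> = card x}) \<and>
     (\<forall>\<nu>. crit \<nu> \<longrightarrow> r \<nu> = {\<nu>}) \<and>
     (\<forall>u. kil u \<longrightarrow> r u = {} \<and> lin_ext r (N u) = {})"

lemma lin_ext_insert:
  assumes "finite c" "a \<notin> c"
  shows "\<nu> \<in> lin_ext f (insert a c) \<longleftrightarrow> (\<nu> \<in> lin_ext f c \<longleftrightarrow> \<nu> \<notin> f a)"
proof (cases "\<nu> \<in> f a")
  case True
  then have "{x \<in> insert a c. \<nu> \<in> f x} = insert a {x \<in> c. \<nu> \<in> f x}" by auto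
  moreover have "card (insert a {x \<in> c. \<nu> \<in> f x}) = Suc (card {x \<in> c. \<nu> \<in> f x})"
    using assms by simp
  ultimately show ?thesis using True by (simp add: lin_ext_def)
next
  case False
  then have "{x \<in> insert a c. \<nu> \<in> f x} = {x \<in> c. \<nu> \<in> f x}" by auto
  then show ?thesis using False by (simp add: lin_ext_def)
qed

lemma lin_ext_cong: "(\<And>x. x \<in> c \<Longrightarrow> f x = g x) \<Longrightarrow> lin_ext f c = lin_ext g c"
  unfolding lin_ext_def by (metis (mono_tags, lifting) Collect_cong)

lemma lin_ext_sub: "\<nu> \<in> lin_ext f c \<Longrightarrow> \<exists>x\<in>c. \<nu> \<in> f x"
  unfolding lin_ext_def by (metis (mono_tags, lifting) card.empty empty_Collect_eq even_zero mem_Collect_eq)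

lemma lin_ext_split:
  assumes "finite c" "a \<in> c"
  shows "\<nu> \<in> lin_ext f c \<longleftrightarrow> (\<nu> \<in> lin_ext f (c - {a}) \<longleftrightarrow> \<nu> \<notin> f a)"
proof -
  have "c = insert a (c - {a})" using assms by auto
  then show ?thesis using lin_ext_insert[of "c - {a}" a \<nu> f] assms by auto
qed

lemma abstract_unique:
  fixes K :: "'a set set"
  assumes fin: "finite K"
    and A3: "\<And>u. kil u \<Longrightarrow> pr u \<in> N u \<and> N u \<subseteq> K \<and> (\<forall>y\<in>N u - {pr u}. rk y < (rk (pr u)::nat))"
    and A6: "\<And>x. x \<in> K \<Longrightarrow> crit x \<or> kil x \<or> (\<exists>u. kil u \<and> x = pr u)"
    and s1: "spec K crit kil N r1" and s2: "spec K crit kil N r2"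
  shows "r1 = r2"
proof
  fix x
  show "r1 x = r2 x"
  proof (induction "rk x" arbitrary: x rule: less_induct)
    case less
    show ?case
    proof (cases "x \<in> K")
      case False then show ?thesis using s1 s2 by (simp add: spec_def)
    next
      case True
      consider "crit x" | "kil x" | u where "kil u" "x = pr u" using A6[OF True] by blast
      then show ?thesis
      proof cases
        case 1 then show ?thesis using s1 s2 by (simp add: spec_def)
      next
        case 2 then show ?thesis using s1 s2 by (simp add: spec_def)
      next
        case 3
        have finN: "finite (N u)" using A3[OF 3(1)] fin finite_subset by blast
        have xN: "x \<in> N u" using A3[OF 3(1)] 3 by simp
        have e1: "lin_ext r1 (N u) = {}" "lin_ext r2 (N u) = {}" using s1 s2 3(1) by (auto simp: spec_def)
        have eq: "lin_ext r1 (N u - {x}) = lin_ext r2 (N u - {x})"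
          by (rule lin_ext_cong) (use less A3[OF 3(1)] 3 in auto)
        show ?thesis
        proof (rule set_eqI)
          fix \<nu>
          have "\<nu> \<in> r1 x \<longleftrightarrow> \<nu> \<in> lin_ext r1 (N u - {x})"
            using lin_ext_split[OF finN xN, of \<nu> r1] e1 by auto
          moreover have "\<nu> \<in> r2 x \<longleftrightarrow> \<nu> \<in> lin_ext r2 (N u - {x})"
            using lin_ext_split[OF finN xN, of \<nu> r2] e1 by auto
          ultimately show "\<nu> \<in> r1 x \<longleftrightarrow> \<nu> \<in> r2 x" using eq by simp
        qed
      qed
    qed
  qed
qed

lemma abstract_exists:
  fixes K :: "'a set set"
  assumes fin: "finite K"
    and A1: "\<And>x. crit x \<Longrightarrow> x \<in> K" "\<And>u. kil u \<Longrightarrow> u \<in> K"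
    and A2: "\<And>x. crit x \<Longrightarrow> \<not> kil x"
    and A3: "\<And>u. kil u \<Longrightarrow> pr u \<in> N u \<and> N u \<subseteq> K \<and> (\<forall>y\<in>N u - {pr u}. rk y < (rk (pr u)::nat))
              \<and> (\<forall>y\<in>N u. card y = card (pr u))"
    and A4: "\<And>u. kil u \<Longrightarrow> \<not> crit (pr u) \<and> \<not> kil (pr u)"
    and A5: "\<And>u u'. kil u \<Longrightarrow> kil u' \<Longrightarrow> pr u = pr u' \<Longrightarrow> u = u'"
  shows "\<exists>r. spec K crit kil N r"
proof -
  define P where "P n r \<longleftrightarrow> (\<forall>x. (x \<notin> K \<or> rk x \<ge> n) \<longrightarrow> r x = {}) \<and>
     (\<forall>x\<in>K. rk x < n \<longrightarrow> (crit x \<longrightarrow> r x = {x}) \<and> (kil x \<longrightarrow> r x = {}) \<and>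
         (\<forall>u. kil u \<and> x = pr u \<longrightarrow> r x = lin_ext r (N u - {x}))) \<and>
     (\<forall>x\<in>K. r x \<subseteq> {\<nu> \<in> K. crit \<nu> \<and> card \<nu> = card x})" for n r
  have "\<exists>r. P n r" for n
  proof (induction n)
    case 0
    have "P 0 (\<lambda>_. {})" by (simp add: P_def)
    then show ?case by blast
  next
    case (Suc n)
    then obtain r where r: "P n r" by blast
    note rr = r[unfolded P_def]
    have r3: "\<forall>x\<in>K. r x \<subseteq> {\<nu> \<in> K. crit \<nu> \<and> card \<nu> = card x}" using rr by (rule conjunct2[THEN conjunct2])
    define r' where "r' x = (if x \<in> K \<and> rk x = n then
        (if crit x then {x} else if (\<exists>u. kil u \<and> x = pr u)
         then lin_ext r (N (SOME u. kil u \<and> x = pr u) - {x}) else {}) else r x)" for x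
    have agree: "r' y = r y" if "rk y < n" for y using that by (simp add: r'_def)
    have lin_agree: "lin_ext r' (N u - {pr u}) = lin_ext r (N u - {pr u})"
      if "kil u" "rk (pr u) \<le> n" for u
    proof (rule lin_ext_cong, rule agree)
      fix y assume "y \<in> N u - {pr u}"
      then have "rk y < rk (pr u)" using A3[OF that(1)] by blast
      then show "rk y < n" using that(2) by simp
    qed
    have "P (Suc n) r'"
      unfolding P_def
    proof (intro conjI allI ballI impI)
      fix x assume "x \<notin> K \<or> Suc n \<le> rk x"
      then show "r' x = {}" using r by (auto simp: P_def r'_def)
    next
      fix x assume "x \<in> K" "rk x < Suc n" "crit x"
      then show "r' x = {x}" using r by (auto simp: P_def r'_def)
    next
      fix x assume "x \<in> K" "rk x < Suc n" "kil x"
      then show "r' x = {}" using r A2 A4 by (auto simp: P_def r'_def)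
    next
      fix x u assume x: "x \<in> K" "rk x < Suc n" and u: "kil u \<and> x = pr u"
      show "r' x = lin_ext r' (N u - {x})"
      proof (cases "rk x = n")
        case True
        have ex: "\<exists>u. kil u \<and> x = pr u" using u by blast
        have "(SOME u. kil u \<and> x = pr u) = u"
          using someI_ex[OF ex] u A5 by blast
        have nc: "\<not> crit x" using A4 u by blast
        have "r' x = lin_ext r (N (SOME u. kil u \<and> x = pr u) - {x})"
          unfolding r'_def using True x nc ex by (simp only: if_True if_False simp_thms)
        with \<open>(SOME u. kil u \<and> x = pr u) = u\<close> have "r' x = lin_ext r (N u - {x})" by simp
        then show ?thesis using lin_agree[of u] u True by simp
      next
        case False
        then have "rk x < n" using x by simp
        then have "r' x = lin_ext r (N u - {x})" using r x u by (simp add: agree P_def)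
        then show ?thesis using lin_agree[of u] u x by simp
      qed
    next
      fix x assume x: "x \<in> K"
      show "r' x \<subseteq> {\<nu> \<in> K. crit \<nu> \<and> card \<nu> = card x}"
      proof (cases "rk x = n \<and> \<not> crit x \<and> (\<exists>u. kil u \<and> x = pr u)")
        case True
        then obtain u where u: "kil u" "x = pr u" by blast
        have sm: "(SOME u. kil u \<and> x = pr u) = u"
          using someI_ex[of "\<lambda>u. kil u \<and> x = pr u"] u A5 by blast
        have "r' x = lin_ext r (N u - {x})" using True sm x by (simp add: r'_def)
        moreover have "lin_ext r (N u - {x}) \<subseteq> {\<nu> \<in> K. crit \<nu> \<and> card \<nu> = card x}"
        proof
          fix \<nu> assume "\<nu> \<in> lin_ext r (N u - {x})"
          from lin_ext_sub[OF this] obtain y where y: "y \<in> N u - {x}" "\<nu> \<in> r y" ..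
          have a3: "N u \<subseteq> K" "\<forall>y\<in>N u. card y = card (pr u)" using A3[OF u(1)] by blast+
          have yK: "y \<in> K" using a3(1) y(1) by blast
          have cy: "card y = card x" using a3(2) y(1) u(2) by blast
          have "r y \<subseteq> {\<nu> \<in> K. crit \<nu> \<and> card \<nu> = card y}" using r3 yK by (rule bspec)
          then show "\<nu> \<in> {\<nu> \<in> K. crit \<nu> \<and> card \<nu> = card x}" using y(2) cy by auto
        qed
        ultimately show ?thesis by simp
      next
        case False
        then show ?thesis using r x by (auto simp: r'_def P_def)
      qed
    qed
    then show ?case by blast
  qed
  then obtain r where r: "P (Suc (Max (rk ` K))) r" by blast
  have lt: "rk x < Suc (Max (rk ` K))" if "x \<in> K" for x
    using fin that by (simp add: le_imp_less_Suc)
  have "spec K crit kil N r"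
    unfolding spec_def
  proof (intro conjI allI impI ballI)
    fix x assume "x \<notin> K" then show "r x = {}" using r by (simp add: P_def)
  next
    fix x assume "x \<in> K" then show "r x \<subseteq> {\<nu> \<in> K. crit \<nu> \<and> card \<nu> = card x}"
      using r by (simp add: P_def)
  next
    fix x assume "crit x" then show "r x = {x}" using r A1 lt by (simp add: P_def)
  next
    fix x assume "kil x" then show "r x = {}" using r A1 lt by (simp add: P_def)
  next
    fix u assume u: "kil u"
    have uK: "pr u \<in> K" "pr u \<in> N u" using A3[OF u] by auto
    have finN: "finite (N u)" using A3[OF u] fin finite_subset by blast
    have eq: "r (pr u) = lin_ext r (N u - {pr u})" using r uK u lt[OF uK(1)] by (simp add: P_def)
    show "lin_ext r (N u) = {}"
      using lin_ext_split[OF finN uK(2), of _ r] eq by auto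
  qed
  then show ?thesis by blast
qed


lemma free_pair_card:
  assumes "simplicial_complex L" "free_pair L \<sigma> \<tau>"
  shows "card \<tau> = card \<sigma> + 1"
proof -
  have st: "\<sigma> \<subset> \<tau>" "\<sigma> \<in> L" "\<tau> \<in> L" and fr: "\<forall>\<rho>\<in>L. \<sigma> \<subseteq> \<rho> \<longrightarrow> \<rho> = \<sigma> \<or> \<rho> = \<tau>"
    using assms(2) unfolding free_pair_def by blast+
  have scL: "\<forall>s\<in>L. finite s \<and> s \<noteq> {}" "\<forall>s\<in>L. \<forall>t. t \<subseteq> s \<and> t \<noteq> {} \<longrightarrow> t \<in> L"
    using assms(1) unfolding simplicial_complex_def by blast+
  have ft: "finite \<tau>" using scL(1) st(3) by simp
  have fs: "finite \<sigma>" using ft st(1) finite_subset by auto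
  obtain v where v: "v \<in> \<tau>" "v \<notin> \<sigma>" using st(1) by auto
  have sub: "insert v \<sigma> \<subseteq> \<tau>" using v st(1) by auto
  have "insert v \<sigma> \<in> L" using scL(2) st(3) sub by simp
  then have "insert v \<sigma> = \<sigma> \<or> insert v \<sigma> = \<tau>" using fr by auto
  then have "insert v \<sigma> = \<tau>" using v(2) by auto
  then show ?thesis using fs v by (metis card_insert_disjoint Suc_eq_plus1)
qed

context
  fixes K :: "'a set set" and Ks :: "'a set set list"
  assumes sc: "simplicial_complex K" and ms: "morse_seq K Ks"
begin

lemma ms_step: "Suc i < length Ks \<Longrightarrow> simplicial_complex (Ks ! Suc i) \<and>
   (elem_expansion (Ks ! Suc i) (Ks ! i) \<or> elem_filling (Ks ! Suc i) (Ks ! i))"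
  using ms unfolding morse_seq_def by simp

lemma step_sub: "Suc i < length Ks \<Longrightarrow> Ks ! i \<subseteq> Ks ! Suc i"
  using ms_step[of i] unfolding elem_expansion_def elem_filling_def by blast

lemma mono: "i \<le> j \<Longrightarrow> j < length Ks \<Longrightarrow> Ks ! i \<subseteq> Ks ! j"
proof (induction j rule: dec_induct)
  case base then show ?case by simp
next
  case (step n) then show ?case using step_sub[of n] by auto
qed

lemma len: "length Ks > 0" using ms unfolding morse_seq_def by simp

lemma lastK: "Ks ! (length Ks - 1) = K"
  using ms unfolding morse_seq_def by (metis last_conv_nth)

lemma Ks0: "Ks ! 0 = {}" using ms unfolding morse_seq_def by simp

lemma subK: "i < length Ks \<Longrightarrow> Ks ! i \<subseteq> K"
  using mono[of i "length Ks - 1"] lastK by simp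

lemma scKs: assumes "i < length Ks" shows "simplicial_complex (Ks ! i)"
proof (cases i)
  case 0 then show ?thesis using Ks0 by (simp add: simplicial_complex_def)
next
  case (Suc j) then show ?thesis using ms_step[of j] assms by simp
qed

definition rk :: "'a set \<Rightarrow> nat" where "rk x = (LEAST j. x \<in> Ks ! j)"

lemma rk_step: "Suc i < length Ks \<Longrightarrow> x \<in> Ks ! Suc i \<Longrightarrow> x \<notin> Ks ! i \<Longrightarrow> rk x = Suc i"
  unfolding rk_def
proof (rule Least_equality)
  fix j assume a: "Suc i < length Ks" "x \<in> Ks ! Suc i" "x \<notin> Ks ! i" "x \<in> Ks ! j"
  show "Suc i \<le> j"
  proof (rule ccontr)
    assume "\<not> Suc i \<le> j"
    then have "Ks ! j \<subseteq> Ks ! i" using mono[of j i] a by simp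
    then show False using a by blast
  qed
qed

lemma rk_le: "x \<in> Ks ! j \<Longrightarrow> rk x \<le> j"
  unfolding rk_def by (rule Least_le)

lemma K_step: assumes "x \<in> K" shows "\<exists>i. Suc i < length Ks \<and> x \<in> Ks ! Suc i \<and> x \<notin> Ks ! i"
proof -
  have ex: "x \<in> Ks ! (length Ks - 1)" using lastK assms by simp
  have r1: "x \<in> Ks ! rk x" unfolding rk_def by (rule LeastI, rule ex)
  have r2: "rk x \<le> length Ks - 1" using rk_le[OF ex] .
  have "rk x \<noteq> 0"
  proof
    assume "rk x = 0" with r1 Ks0 show False by simp
  qed
  then obtain i where i: "rk x = Suc i" using not0_implies_Suc by blast
  have "x \<notin> Ks ! i" using not_less_Least[of i "\<lambda>j. x \<in> Ks ! j"] i unfolding rk_def by simp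
  then show ?thesis using i r1 r2 len by (intro exI[of _ i]) auto
qed

lemma crit_info: "critical Ks \<nu> \<Longrightarrow> \<exists>i. Suc i < length Ks \<and> \<nu> \<in> Ks ! Suc i \<and> Ks ! i = Ks ! Suc i - {\<nu>}"
proof -
  assume "critical Ks \<nu>"
  then obtain i where i: "Suc i < length Ks" "facet (Ks ! Suc i) \<nu>" "Ks ! i = Ks ! Suc i - {\<nu>}"
    unfolding critical_def by blast
  have "\<nu> \<in> Ks ! Suc i" using i(2) unfolding facet_def by (rule conjunct1)
  then show ?thesis using i by (intro exI[of _ i]) simp
qed

lemma reg_info: "regular_pair Ks \<sigma> \<tau> \<Longrightarrow> \<exists>i. Suc i < length Ks \<and> free_pair (Ks ! Suc i) \<sigma> \<tau> \<and>
   \<sigma> \<in> Ks ! Suc i \<and> \<tau> \<in> Ks ! Suc i \<and> \<sigma> \<subset> \<tau> \<and> Ks ! i = Ks ! Suc i - {\<sigma>, \<tau>}"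
proof -
  assume "regular_pair Ks \<sigma> \<tau>"
  then obtain i where i: "Suc i < length Ks" "free_pair (Ks ! Suc i) \<sigma> \<tau>" "Ks ! i = Ks ! Suc i - {\<sigma>, \<tau>}"
    unfolding regular_pair_def by blast
  have "\<sigma> \<subset> \<tau> \<and> \<sigma> \<in> Ks ! Suc i \<and> \<tau> \<in> Ks ! Suc i" using i(2) unfolding free_pair_def by blast
  then show ?thesis using i by (intro exI[of _ i]) simp
qed

lemma crit_K: "critical Ks \<nu> \<Longrightarrow> \<nu> \<in> K"
proof -
  assume "critical Ks \<nu>"
  then obtain i where i: "Suc i < length Ks" "\<nu> \<in> Ks ! Suc i" using crit_info by blast
  then show ?thesis using subK[of "Suc i"] by auto
qed

lemma reg_K: "regular_pair Ks \<sigma> \<tau> \<Longrightarrow> \<sigma> \<in> K \<and> \<tau> \<in> K"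
proof -
  assume "regular_pair Ks \<sigma> \<tau>"
  then obtain i where i: "Suc i < length Ks" "\<sigma> \<in> Ks ! Suc i" "\<tau> \<in> Ks ! Suc i" using reg_info by blast
  then show ?thesis using subK[of "Suc i"] by auto
qed

lemma reg_card: "regular_pair Ks \<sigma> \<tau> \<Longrightarrow> card \<tau> = card \<sigma> + 1"
  using reg_info scKs free_pair_card by metis

lemma crit_not_reg:
  assumes "critical Ks x" "regular_pair Ks \<sigma> \<tau>" "x = \<sigma> \<or> x = \<tau>"
  shows False
proof -
  obtain i where i: "Suc i < length Ks" "x \<in> Ks ! Suc i" "Ks ! i = Ks ! Suc i - {x}"
    using crit_info[OF assms(1)] by blast
  obtain j where j: "Suc j < length Ks" "\<sigma> \<in> Ks ! Suc j" "\<tau> \<in> Ks ! Suc j" "\<sigma> \<subset> \<tau>"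
     "Ks ! j = Ks ! Suc j - {\<sigma>, \<tau>}"
    using reg_info[OF assms(2)] by blast
  have "rk x = Suc i" using rk_step[OF i(1) i(2)] i(3) by blast
  moreover have "rk x = Suc j" using rk_step[OF j(1)] j assms(3) by blast
  ultimately have "i = j" by simp
  then show False using i j assms(3) by blast
qed

lemma reg_reg:
  assumes "regular_pair Ks \<sigma> \<tau>" "regular_pair Ks \<sigma>' \<tau>'" "\<sigma> = \<sigma>' \<or> \<tau> = \<tau>' \<or> \<sigma> = \<tau>' \<or> \<tau> = \<sigma>'"
  shows "\<sigma> = \<sigma>' \<and> \<tau> = \<tau>'"
proof -
  obtain i where i: "Suc i < length Ks" "\<sigma> \<in> Ks ! Suc i" "\<tau> \<in> Ks ! Suc i" "\<sigma> \<subset> \<tau>"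
     "Ks ! i = Ks ! Suc i - {\<sigma>, \<tau>}"
    using reg_info[OF assms(1)] by blast
  obtain j where j: "Suc j < length Ks" "\<sigma>' \<in> Ks ! Suc j" "\<tau>' \<in> Ks ! Suc j" "\<sigma>' \<subset> \<tau>'"
     "Ks ! j = Ks ! Suc j - {\<sigma>', \<tau>'}"
    using reg_info[OF assms(2)] by blast
  have ri: "rk \<sigma> = Suc i" "rk \<tau> = Suc i" using rk_step[OF i(1)] i by blast+
  have rj: "rk \<sigma>' = Suc j" "rk \<tau>' = Suc j" using rk_step[OF j(1)] j by blast+
  have "i = j" using ri rj assms(3) by auto
  have e1: "{\<sigma>, \<tau>} = Ks ! Suc i - Ks ! i" using i(2,3,5) by auto
  have e2: "{\<sigma>', \<tau>'} = Ks ! Suc j - Ks ! j" using j(2,3,5) by auto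
  have "{\<sigma>, \<tau>} = {\<sigma>', \<tau>'}" using e1 e2 \<open>i = j\<close> by simp
  then have "(\<sigma> = \<sigma>' \<and> \<tau> = \<tau>') \<or> (\<sigma> = \<tau>' \<and> \<tau> = \<sigma>')" by (rule doubleton_eq_iff[THEN iffD1])
  moreover have "\<not> (\<sigma> = \<tau>' \<and> \<tau> = \<sigma>')"
  proof
    assume h: "\<sigma> = \<tau>' \<and> \<tau> = \<sigma>'"
    have "\<tau>' \<subset> \<sigma>'" using i(4) h by simp
    then show False using j(4) by (meson less_asym)
  qed
  ultimately show ?thesis by blast
qed

lemma classify: "x \<in> K \<Longrightarrow> critical Ks x \<or> lower_regular Ks x \<or> upper_regular Ks x"
proof -
  assume "x \<in> K"
  then obtain i where i: "Suc i < length Ks" "x \<in> Ks ! Suc i" "x \<notin> Ks ! i" using K_step by blast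
  from ms_step[OF i(1)] have "elem_expansion (Ks ! Suc i) (Ks ! i) \<or> elem_filling (Ks ! Suc i) (Ks ! i)" by blast
  then show ?thesis
  proof
    assume "elem_expansion (Ks ! Suc i) (Ks ! i)"
    then obtain \<sigma> \<tau> where "free_pair (Ks ! Suc i) \<sigma> \<tau>" "Ks ! i = Ks ! Suc i - {\<sigma>, \<tau>}"
      unfolding elem_expansion_def by blast
    then have "regular_pair Ks \<sigma> \<tau>" "x = \<sigma> \<or> x = \<tau>" using i unfolding regular_pair_def by auto
    then show ?thesis unfolding lower_regular_def upper_regular_def by blast
  next
    assume "elem_filling (Ks ! Suc i) (Ks ! i)"
    then obtain \<nu> where "facet (Ks ! Suc i) \<nu>" "Ks ! i = Ks ! Suc i - {\<nu>}"
      unfolding elem_filling_def by blast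
    then have "critical Ks \<nu>" "x = \<nu>" using i unfolding critical_def by auto
    then show ?thesis by blast
  qed
qed


lemma finK: "finite K" using sc unfolding simplicial_complex_def by blast

lemma finS: "x \<in> K \<Longrightarrow> finite x" using sc unfolding simplicial_complex_def by blast

lemma crit_not_upper: "critical Ks x \<Longrightarrow> \<not> upper_regular Ks x"
  unfolding upper_regular_def using crit_not_reg by blast

lemma crit_not_lower: "critical Ks x \<Longrightarrow> \<not> lower_regular Ks x"
  unfolding lower_regular_def using crit_not_reg by blast

lemma upper_not_lower: "upper_regular Ks x \<Longrightarrow> \<not> lower_regular Ks x"
proof
  assume "upper_regular Ks x" "lower_regular Ks x"
  then obtain a b where ab: "regular_pair Ks a x" "regular_pair Ks x b"
    unfolding upper_regular_def lower_regular_def by blast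
  then have "a = x" using reg_reg[OF ab] by blast
  moreover obtain i where "a \<subset> x" using reg_info[OF ab(1)] by blast
  ultimately show False by simp
qed

lemma ref_spec: "spec K (critical Ks) (upper_regular Ks) (bd K) (reference_map K Ks)"
proof -
  define pr where "pr \<tau> = (SOME \<sigma>. regular_pair Ks \<sigma> \<tau>)" for \<tau>
  have prp: "regular_pair Ks (pr u) u" if "upper_regular Ks u" for u
    using that unfolding upper_regular_def pr_def by (rule someI_ex)
  have ex: "\<exists>r. spec K (critical Ks) (upper_regular Ks) (bd K) r"
  proof (rule abstract_exists[where pr = pr and rk = rk])
    show "finite K" by (rule finK)
    show "\<And>x. critical Ks x \<Longrightarrow> x \<in> K" by (rule crit_K)
    show "\<And>u. upper_regular Ks u \<Longrightarrow> u \<in> K" unfolding upper_regular_def using reg_K by blast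
    show "\<And>x. critical Ks x \<Longrightarrow> \<not> upper_regular Ks x" by (rule crit_not_upper)
  next
    fix u assume u: "upper_regular Ks u"
    have rp: "regular_pair Ks (pr u) u" by (rule prp[OF u])
    obtain i where i: "Suc i < length Ks" "free_pair (Ks ! Suc i) (pr u) u"
       "pr u \<in> Ks ! Suc i" "u \<in> Ks ! Suc i" "pr u \<subset> u" "Ks ! i = Ks ! Suc i - {pr u, u}"
      using reg_info[OF rp] by blast
    have K: "pr u \<in> K" "u \<in> K" using reg_K[OF rp] by auto
    have cd: "card u = card (pr u) + 1" by (rule reg_card[OF rp])
    have rkp: "rk (pr u) = Suc i" using rk_step[OF i(1) i(3)] i(6) by blast
    have "pr u \<in> bd K u" unfolding bd_def using K cd i(5) by auto
    moreover have "bd K u \<subseteq> K" unfolding bd_def by blast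
    moreover have "\<forall>y\<in>bd K u - {pr u}. rk y < rk (pr u)"
    proof
      fix y assume y: "y \<in> bd K u - {pr u}"
      then have yK: "y \<in> K" "y \<subseteq> u" "card y + 1 = card u" unfolding bd_def by auto
      have "y \<noteq> {}" using sc yK(1) unfolding simplicial_complex_def by blast
      then have "y \<in> Ks ! Suc i" using scKs[OF i(1)] i(4) yK(2) unfolding simplicial_complex_def by blast
      moreover have "y \<noteq> u" using yK(3) by auto
      ultimately have "y \<in> Ks ! i" using i(6) y by auto
      then have "rk y \<le> i" by (rule rk_le)
      then show "rk y < rk (pr u)" using rkp by simp
    qed
    moreover have "\<forall>y\<in>bd K u. card y = card (pr u)" unfolding bd_def using cd by auto
    ultimately show "pr u \<in> bd K u \<and> bd K u \<subseteq> K \<and> (\<forall>y\<in>bd K u - {pr u}. rk y < rk (pr u))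
              \<and> (\<forall>y\<in>bd K u. card y = card (pr u))" by blast
    have "lower_regular Ks (pr u)" using rp unfolding lower_regular_def by blast
    then show "\<not> critical Ks (pr u) \<and> \<not> upper_regular Ks (pr u)"
      using crit_not_lower upper_not_lower by blast
  next
    fix u u' assume "upper_regular Ks u" "upper_regular Ks u'" "pr u = pr u'"
    then show "u = u'" using prp reg_reg by metis
  qed
  have un: "r1 = r2" if "spec K (critical Ks) (upper_regular Ks) (bd K) r1"
      "spec K (critical Ks) (upper_regular Ks) (bd K) r2" for r1 r2
  proof (rule abstract_unique[where pr = pr and rk = rk, OF finK _ _ that])
    fix u assume u: "upper_regular Ks u"
    have rp: "regular_pair Ks (pr u) u" by (rule prp[OF u])
    obtain i where i: "Suc i < length Ks" "free_pair (Ks ! Suc i) (pr u) u"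
       "pr u \<in> Ks ! Suc i" "u \<in> Ks ! Suc i" "pr u \<subset> u" "Ks ! i = Ks ! Suc i - {pr u, u}"
      using reg_info[OF rp] by blast
    have K: "pr u \<in> K" "u \<in> K" using reg_K[OF rp] by auto
    have cd: "card u = card (pr u) + 1" by (rule reg_card[OF rp])
    have rkp: "rk (pr u) = Suc i" using rk_step[OF i(1) i(3)] i(6) by blast
    have "pr u \<in> bd K u" unfolding bd_def using K cd i(5) by auto
    moreover have "bd K u \<subseteq> K" unfolding bd_def by blast
    moreover have "\<forall>y\<in>bd K u - {pr u}. rk y < rk (pr u)"
    proof
      fix y assume y: "y \<in> bd K u - {pr u}"
      then have yK: "y \<in> K" "y \<subseteq> u" "card y + 1 = card u" unfolding bd_def by auto
      have "y \<noteq> {}" using sc yK(1) unfolding simplicial_complex_def by blast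
      then have "y \<in> Ks ! Suc i" using scKs[OF i(1)] i(4) yK(2) unfolding simplicial_complex_def by blast
      moreover have "y \<noteq> u" using yK(3) by auto
      ultimately have "y \<in> Ks ! i" using i(6) y by auto
      then have "rk y \<le> i" by (rule rk_le)
      then show "rk y < rk (pr u)" using rkp by simp
    qed
    ultimately show "pr u \<in> bd K u \<and> bd K u \<subseteq> K \<and> (\<forall>y\<in>bd K u - {pr u}. rk y < rk (pr u))" by blast
  next
    fix x assume "x \<in> K"
    then have "critical Ks x \<or> lower_regular Ks x \<or> upper_regular Ks x" by (rule classify)
    moreover have "\<exists>u. upper_regular Ks u \<and> x = pr u" if lx: "lower_regular Ks x"
    proof -
      obtain t where t: "regular_pair Ks x t" using lx unfolding lower_regular_def by blast
      then have ut: "upper_regular Ks t" unfolding upper_regular_def by blast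
      then have "x = pr t" using prp[OF ut] t reg_reg by metis
      then show ?thesis using ut by blast
    qed
    ultimately show "critical Ks x \<or> upper_regular Ks x \<or> (\<exists>u. upper_regular Ks u \<and> x = pr u)" by blast
  qed
  have eq: "reference_map K Ks = (THE r. spec K (critical Ks) (upper_regular Ks) (bd K) r)"
    unfolding reference_map_def spec_def ..
  have eu: "\<exists>!r. spec K (critical Ks) (upper_regular Ks) (bd K) r" using ex un by blast
  show ?thesis unfolding eq by (rule theI'[OF eu])
qed


lemma coref_spec: "spec K (critical Ks) (lower_regular Ks) (cobd K) (coreference_map K Ks)"
proof -
  define pr where "pr \<sigma> = (SOME \<tau>. regular_pair Ks \<sigma> \<tau>)" for \<sigma>
  define rk' where "rk' x = length Ks - rk x" for x
  have prp: "regular_pair Ks u (pr u)" if "lower_regular Ks u" for u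
    using that unfolding lower_regular_def pr_def by (rule someI_ex)
  have A3: "pr u \<in> cobd K u \<and> cobd K u \<subseteq> K \<and> (\<forall>y\<in>cobd K u - {pr u}. rk' y < rk' (pr u))
              \<and> (\<forall>y\<in>cobd K u. card y = card (pr u))" if u: "lower_regular Ks u" for u
  proof -
    have rp: "regular_pair Ks u (pr u)" by (rule prp[OF u])
    obtain i where i: "Suc i < length Ks" "free_pair (Ks ! Suc i) u (pr u)"
       "u \<in> Ks ! Suc i" "pr u \<in> Ks ! Suc i" "u \<subset> pr u" "Ks ! i = Ks ! Suc i - {u, pr u}"
      using reg_info[OF rp] by blast
    have K: "pr u \<in> K" "u \<in> K" using reg_K[OF rp] by auto
    have cd: "card (pr u) = card u + 1" by (rule reg_card[OF rp])
    have rkp: "rk (pr u) = Suc i" using rk_step[OF i(1) i(4)] i(6) by blast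
    have fr: "\<forall>\<rho>\<in>Ks ! Suc i. u \<subseteq> \<rho> \<longrightarrow> \<rho> = u \<or> \<rho> = pr u"
      using i(2) unfolding free_pair_def by blast
    have "pr u \<in> cobd K u" unfolding cobd_def using K cd i(5) by auto
    moreover have "cobd K u \<subseteq> K" unfolding cobd_def by blast
    moreover have "\<forall>y\<in>cobd K u - {pr u}. rk' y < rk' (pr u)"
    proof
      fix y assume y: "y \<in> cobd K u - {pr u}"
      then have yK: "y \<in> K" "u \<subseteq> y" "card y = card u + 1" "y \<noteq> pr u" unfolding cobd_def by auto
      have "y \<noteq> u" using yK(3) by auto
      then have nin: "y \<notin> Ks ! Suc i" using fr yK(2) yK(4) by blast
      obtain j where j: "Suc j < length Ks" "y \<in> Ks ! Suc j" "y \<notin> Ks ! j" using K_step[OF yK(1)] by blast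
      have rky: "rk y = Suc j" by (rule rk_step[OF j])
      have "\<not> j \<le> i"
      proof
        assume "j \<le> i"
        then have "Ks ! Suc j \<subseteq> Ks ! Suc i" using mono[of "Suc j" "Suc i"] i(1) by simp
        then show False using j(2) nin by blast
      qed
      then show "rk' y < rk' (pr u)" unfolding rk'_def using rky rkp j(1) by simp
    qed
    moreover have "\<forall>y\<in>cobd K u. card y = card (pr u)" unfolding cobd_def using cd by auto
    ultimately show ?thesis by blast
  qed
  have ex: "\<exists>r. spec K (critical Ks) (lower_regular Ks) (cobd K) r"
  proof (rule abstract_exists[where pr = pr and rk = rk'])
    show "finite K" by (rule finK)
    show "\<And>x. critical Ks x \<Longrightarrow> x \<in> K" by (rule crit_K)
    show "\<And>u. lower_regular Ks u \<Longrightarrow> u \<in> K" unfolding lower_regular_def using reg_K by blast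
    show "\<And>x. critical Ks x \<Longrightarrow> \<not> lower_regular Ks x" by (rule crit_not_lower)
  next
    fix u assume u: "lower_regular Ks u"
    show "pr u \<in> cobd K u \<and> cobd K u \<subseteq> K \<and> (\<forall>y\<in>cobd K u - {pr u}. rk' y < rk' (pr u))
              \<and> (\<forall>y\<in>cobd K u. card y = card (pr u))" by (rule A3[OF u])
    have "upper_regular Ks (pr u)" using prp[OF u] unfolding upper_regular_def by blast
    then show "\<not> critical Ks (pr u) \<and> \<not> lower_regular Ks (pr u)"
      using crit_not_upper upper_not_lower by blast
  next
    fix u u' assume "lower_regular Ks u" "lower_regular Ks u'" "pr u = pr u'"
    then show "u = u'" using prp reg_reg by metis
  qed
  have un: "r1 = r2" if "spec K (critical Ks) (lower_regular Ks) (cobd K) r1"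
      "spec K (critical Ks) (lower_regular Ks) (cobd K) r2" for r1 r2
  proof (rule abstract_unique[where pr = pr and rk = rk', OF finK _ _ that])
    fix u assume u: "lower_regular Ks u"
    show "pr u \<in> cobd K u \<and> cobd K u \<subseteq> K \<and> (\<forall>y\<in>cobd K u - {pr u}. rk' y < rk' (pr u))"
      using A3[OF u] by blast
  next
    fix x assume "x \<in> K"
    then have "critical Ks x \<or> lower_regular Ks x \<or> upper_regular Ks x" by (rule classify)
    moreover have "\<exists>u. lower_regular Ks u \<and> x = pr u" if ux: "upper_regular Ks x"
    proof -
      obtain t where t: "regular_pair Ks t x" using ux unfolding upper_regular_def by blast
      then have ut: "lower_regular Ks t" unfolding lower_regular_def by blast
      then have "x = pr t" using prp[OF ut] t reg_reg by metis
      then show ?thesis using ut by blast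
    qed
    ultimately show "critical Ks x \<or> lower_regular Ks x \<or> (\<exists>u. lower_regular Ks u \<and> x = pr u)" by blast
  qed
  have eq: "coreference_map K Ks = (THE r. spec K (critical Ks) (lower_regular Ks) (cobd K) r)"
    unfolding coreference_map_def spec_def ..
  have eu: "\<exists>!r. spec K (critical Ks) (lower_regular Ks) (cobd K) r" using ex un by blast
  show ?thesis unfolding eq by (rule theI'[OF eu])
qed

end

lemma parity_sum:
  assumes "finite A" "a \<in> A" "\<And>y. y \<in> A - {a} \<Longrightarrow> even (f y :: nat)"
  shows "odd (sum f A) \<longleftrightarrow> odd (f a)"
proof -
  have "sum f A = f a + sum f (A - {a})" using assms(1,2) by (rule sum.remove)
  moreover have "even (sum f (A - {a}))" using assms(3) by (intro dvd_sum) auto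
  ultimately show ?thesis by simp
qed

theorem theorem3:
  fixes K :: "'a set set" and Ks :: "'a set set list" and \<sigma> \<tau> :: "'a set"
  assumes "simplicial_complex K"
    and "morse_seq K Ks"
    and "critical Ks \<sigma>" and "critical Ks \<tau>"
  shows "\<sigma> \<in> morse_bd K Ks \<tau> \<longleftrightarrow> \<tau> \<in> morse_cobd K Ks \<sigma>"
proof -
  note sc = assms(1) and ms = assms(2)
  define r where "r = reference_map K Ks"
  define c where "c = coreference_map K Ks"
  have rs: "spec K (critical Ks) (upper_regular Ks) (bd K) r"
    unfolding r_def by (rule ref_spec[OF sc ms])
  have cs: "spec K (critical Ks) (lower_regular Ks) (cobd K) c"
    unfolding c_def by (rule coref_spec[OF sc ms])
  have finK: "finite K" by (rule finK[OF sc ms])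
  have sK: "\<sigma> \<in> K" "\<tau> \<in> K" using crit_K[OF sc ms] assms(3,4) by auto
  define s where "s = {x \<in> K. \<sigma> \<in> r x}"
  define t where "t = {y \<in> K. \<tau> \<in> c y}"
  define f where "f y = card {x \<in> bd K y. \<sigma> \<in> r x}" for y
  define g where "g x = card {y \<in> cobd K x. \<tau> \<in> c y}" for x
  define E1 where "E1 = (SIGMA y:t. {x \<in> bd K y. \<sigma> \<in> r x})"
  define E2 where "E2 = (SIGMA x:s. {y \<in> cobd K x. \<tau> \<in> c y})"
  have finb: "finite (bd K y)" for y using finK unfolding bd_def by simp
  have fincb: "finite (cobd K y)" for y using finK unfolding cobd_def by simp
  have ft: "finite t" "finite s" using finK unfolding t_def s_def by simp_all
  have c1: "card E1 = sum f t" unfolding E1_def f_def using ft finb by simp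
  have c2: "card E2 = sum g s" unfolding E2_def g_def using ft fincb by simp
  have swap: "E2 = (\<lambda>(a, b). (b, a)) ` E1"
    unfolding E1_def E2_def s_def t_def bd_def cobd_def by auto
  have inj: "inj_on (\<lambda>(a, b). (b, a)) E1" by (auto simp: inj_on_def)
  have "card E2 = card E1" using swap card_image[OF inj] by simp
  then have seq: "sum f t = sum g s" using c1 c2 by simp
  have rcrit: "r \<nu> = {\<nu>}" if "critical Ks \<nu>" for \<nu> using rs that unfolding spec_def by blast
  have ccrit: "c \<nu> = {\<nu>}" if "critical Ks \<nu>" for \<nu> using cs that unfolding spec_def by blast
  have tt: "\<tau> \<in> t" unfolding t_def using sK ccrit[OF assms(4)] by simp
  have ss: "\<sigma> \<in> s" unfolding s_def using sK rcrit[OF assms(3)] by simp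
  have p1: "odd (sum f t) \<longleftrightarrow> odd (f \<tau>)"
  proof (rule parity_sum[OF ft(1) tt])
    fix y assume y: "y \<in> t - {\<tau>}"
    then have yK: "y \<in> K" "\<tau> \<in> c y" "y \<noteq> \<tau>" unfolding t_def by auto
    have "\<not> critical Ks y" using ccrit yK by auto
    moreover have "\<not> lower_regular Ks y" using cs yK unfolding spec_def by auto
    ultimately have "upper_regular Ks y" using classify[OF sc ms yK(1)] by blast
    then have "lin_ext r (bd K y) = {}" using rs unfolding spec_def by blast
    then show "even (f y)" unfolding f_def lin_ext_def by blast
  qed
  have p2: "odd (sum g s) \<longleftrightarrow> odd (g \<sigma>)"
  proof (rule parity_sum[OF ft(2) ss])
    fix y assume y: "y \<in> s - {\<sigma>}"
    then have yK: "y \<in> K" "\<sigma> \<in> r y" "y \<noteq> \<sigma>" unfolding s_def by auto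
    have "\<not> critical Ks y" using rcrit yK by auto
    moreover have "\<not> upper_regular Ks y" using rs yK unfolding spec_def by auto
    ultimately have "lower_regular Ks y" using classify[OF sc ms yK(1)] by blast
    then have "lin_ext c (cobd K y) = {}" using cs unfolding spec_def by blast
    then show "even (g y)" unfolding g_def lin_ext_def by blast
  qed
  have "\<sigma> \<in> morse_bd K Ks \<tau> \<longleftrightarrow> odd (f \<tau>)"
    unfolding morse_bd_def lin_ext_def f_def r_def by simp
  moreover have "\<tau> \<in> morse_cobd K Ks \<sigma> \<longleftrightarrow> odd (g \<sigma>)"
    unfolding morse_cobd_def lin_ext_def g_def c_def by simp
  ultimately show ?thesis using p1 p2 seq by simp
qed

end
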